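(* Let $a,b$ be integers with $0<b<a$, let $S=\langle a,a+1,\ldots,a+b\rangle$ with conductor $c$, and let $m\ge 2c-1$. Let $M$ be an $(S,m,r)$-amenable set whose shadow $L_M$ is not the whole ground. Then there exists an $(S,m,r)$-amenable set $N$ whose shadow $L_N$ does not contain $m+a+b-1$ and satisfies $\sharp L_N\le\sharp L_M$.
   Context: For $x\in S$, $\mathrm D(x)=\{\alpha\in S\mid x-\alpha\in S\}$. A set $M=\{m_1<\cdots<m_r\}\subseteq S$ with $2c-1\le m=m_1$ is $(S,m,r)$-amenable if $\mathrm D(m_i)\cap[m,\infty)\subseteq M$ for all $i$. The ground is $\{m,m+1,\ldots,m+a+b-1\}$, and the shadow of $M$ is $M\cap\{m,\ldots,m+a+b-1\}$. *)

theory Defs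
  imports Main
begin

inductive_set gen_semigroup :: "nat set \<Rightarrow> nat set" for G :: "nat set" where
  zero: "0 \<in> gen_semigroup G"
| add: "x \<in> gen_semigroup G \<Longrightarrow> g \<in> G \<Longrightarrow> x + g \<in> gen_semigroup G"

definition interval_semigroup :: "nat \<Rightarrow> nat \<Rightarrow> nat set" where
  "interval_semigroup a b = gen_semigroup {a..a+b}"

definition conductor :: "nat set \<Rightarrow> nat" where
  "conductor S = (LEAST c. \<forall>n\<ge>c. n \<in> S)"

text \<open>D(x) = {alpha in S | x - alpha in S} (x - alpha must be a natural number).\<close>
definition Dset :: "nat set \<Rightarrow> nat \<Rightarrow> nat set" where
  "Dset S x = {\<alpha> \<in> S. \<alpha> \<le> x \<and> x - \<alpha> \<in> S}"

definition amenable :: "nat set \<Rightarrow> nat \<Rightarrow> nat \<Rightarrow> nat set \<Rightarrow> bool" where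
  "amenable S m r M \<longleftrightarrow> finite M \<and> card M = r \<and> M \<subseteq> S \<and> m \<in> M \<and> (\<forall>x\<in>M. m \<le> x)
     \<and> 2 * conductor S \<le> m + 1
     \<and> (\<forall>x\<in>M. Dset S x \<inter> {m..} \<subseteq> M)"

definition ground :: "nat \<Rightarrow> nat \<Rightarrow> nat \<Rightarrow> nat set" where
  "ground m a b = {m..m + a + b - 1}"

definition shadow :: "nat \<Rightarrow> nat \<Rightarrow> nat \<Rightarrow> nat set \<Rightarrow> nat set" where
  "shadow m a b M = M \<inter> ground m a b"

end

theory Submission
  imports Defs
begin

definition Sab :: "nat \<Rightarrow> nat \<Rightarrow> nat set" where
  "Sab a b = {x. \<exists>k. k*a \<le> x \<and> x \<le> k*(a+b)}"

lemma Sab_0: "0 \<in> Sab a b"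
  unfolding Sab_def by (rule CollectI, rule exI[of _ 0]) simp

lemma Sab_add: assumes "x \<in> Sab a b" "y \<in> Sab a b" shows "x + y \<in> Sab a b"
proof -
  obtain k1 where k1: "k1*a \<le> x" "x \<le> k1*(a+b)" using assms(1) unfolding Sab_def by blast
  obtain k2 where k2: "k2*a \<le> y" "y \<le> k2*(a+b)" using assms(2) unfolding Sab_def by blast
  have "(k1+k2)*a \<le> x+y" "x+y \<le> (k1+k2)*(a+b)" using k1 k2 by (simp_all add: algebra_simps)
  thus ?thesis unfolding Sab_def by blast
qed

lemma S_sub: "x \<in> gen_semigroup {a..a+b} \<Longrightarrow> x \<in> Sab a b"
proof (induction rule: gen_semigroup.induct)
  case zero then show ?case by (rule Sab_0)
next
  case (add x g)
  have "g \<in> Sab a b" using add(2) unfolding Sab_def by (auto intro!: exI[of _ 1])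
  then show ?case using add Sab_add by blast
qed

lemma S_sup: "k*a \<le> x \<Longrightarrow> x \<le> k*(a+b) \<Longrightarrow> x \<in> gen_semigroup {a..a+b}"
proof (induction k arbitrary: x)
  case 0 then show ?case by (simp add: gen_semigroup.zero)
next
  case (Suc k)
  show ?case
  proof (cases "k*(a+b) + a \<le> x")
    case True
    have "k*(a+b) \<in> gen_semigroup {a..a+b}" using Suc.IH by simp
    moreover have "x - k*(a+b) \<in> {a..a+b}" using True Suc.prems apply (simp add: algebra_simps) by linarith
    ultimately have "k*(a+b) + (x - k*(a+b)) \<in> gen_semigroup {a..a+b}" by (rule gen_semigroup.add)
    then show ?thesis using True by simp
  next
    case False
    have "x - a \<in> gen_semigroup {a..a+b}" using False Suc.prems by (intro Suc.IH) (simp_all add: algebra_simps)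
    moreover have "a \<in> {a..a+b}" by simp
    ultimately have "(x - a) + a \<in> gen_semigroup {a..a+b}" by (rule gen_semigroup.add)
    then show ?thesis using Suc.prems by simp
  qed
qed

lemma S_eq: "interval_semigroup a b = Sab a b"
proof
  show "interval_semigroup a b \<subseteq> Sab a b" unfolding interval_semigroup_def using S_sub by blast
  show "Sab a b \<subseteq> interval_semigroup a b" unfolding interval_semigroup_def Sab_def using S_sup by blast
qed

lemma Sab_big: assumes "0 < b" "a*a \<le> x" shows "x \<in> Sab a b"
proof (cases "a = 0")
  case True
  have "x \<le> x*b" using assms(1) by simp
  then have "x*a \<le> x \<and> x \<le> x*(a+b)" using True by simp
  then show ?thesis unfolding Sab_def by blast
next
  case False
  define k where "k = x div a"
  have k1: "k*a \<le> x" unfolding k_def by (simp add: div_times_less_eq_dividend)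
  have k2: "x < k*a + a" unfolding k_def using div_mult_mod_eq[of x a] mod_less_divisor[of a x] False
    by linarith
  have "a*a div a \<le> k" unfolding k_def using div_le_mono[OF assms(2), of a] .
  hence "a \<le> k" using False by simp
  moreover have "k \<le> k*b" using assms(1) by simp
  ultimately have "a \<le> k*b" by linarith
  hence "x \<le> k*(a+b)" using k2 by (simp add: algebra_simps)
  thus ?thesis using k1 unfolding Sab_def by blast
qed

lemma win_le_Q:
  fixes a b t :: nat and D :: "nat set"
  assumes down: "\<And>y \<alpha>. y \<in> D \<Longrightarrow> \<alpha> \<le> y \<Longrightarrow> y - \<alpha> \<in> Sab a b \<Longrightarrow> \<alpha> \<in> D"
  shows "card {x\<in>D. t*(a+b) \<le> x \<and> x < t*(a+b) + (a+b)} \<le> card {q. q \<le> a+b-1 \<and> (\<forall>\<alpha>. \<alpha> \<le> a+b-1 \<and> \<alpha> \<notin> D \<longrightarrow> \<not>(q \<le> \<alpha> \<and> \<alpha> \<le> q + t*b) \<and> q + t*b < \<alpha> + a)}"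
    (is "card ?W \<le> card ?Q")
proof -
  have fin: "finite ?Q" by (rule finite_subset[of _ "{..a+b-1}"]) auto
  have "inj_on (\<lambda>x. x - t*(a+b)) ?W" by (auto simp: inj_on_def)
  moreover have "(\<lambda>x. x - t*(a+b)) ` ?W \<subseteq> ?Q"
  proof
    fix q assume "q \<in> (\<lambda>x. x - t*(a+b)) ` ?W"
    then obtain x where x: "x\<in>D" "t*(a+b) \<le> x" "x < t*(a+b)+(a+b)" and q: "q = x - t*(a+b)" by auto
    have tab: "t*(a+b) = t*a + t*b" by (simp add: algebra_simps)
    have qn: "q \<le> a+b-1" using x q by linarith
    have A1: "\<not>(q \<le> \<alpha> \<and> \<alpha> \<le> q + t*b)" if \<alpha>: "\<alpha> \<le> a+b-1 \<and> \<alpha> \<notin> D" for \<alpha>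
    proof
      assume h: "q \<le> \<alpha> \<and> \<alpha> \<le> q + t*b"
      have le: "\<alpha> \<le> x" using h q x tab by linarith
      have "t*a \<le> x - \<alpha> \<and> x - \<alpha> \<le> t*(a+b)" using h q x tab by linarith
      hence "x - \<alpha> \<in> Sab a b" unfolding Sab_def by blast
      then show False using down[OF x(1) le] \<alpha> by blast
    qed
    have A2: "q + t*b < \<alpha> + a" if \<alpha>: "\<alpha> \<le> a+b-1 \<and> \<alpha> \<notin> D" for \<alpha>
    proof (rule ccontr)
      assume h: "\<not> q + t*b < \<alpha> + a"
      have le: "\<alpha> \<le> x" using h q x tab by linarith
      have st: "Suc t * a = t*a + a" "Suc t * (a+b) = t*a + t*b + a + b" by (simp_all add: algebra_simps)
      have "Suc t*a \<le> x - \<alpha> \<and> x - \<alpha> \<le> Suc t*(a+b)" using h q x tab st by linarith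
      hence "x - \<alpha> \<in> Sab a b" unfolding Sab_def by blast
      then show False using down[OF x(1) le] \<alpha> by blast
    qed
    show "q \<in> ?Q" using qn A1 A2 by blast
  qed
  ultimately show ?thesis using fin card_inj_on_le by blast
qed

lemma arith1: "(cQ::nat) \<le> \<mu>+a-d - Suc \<nu> \<Longrightarrow> \<mu> + (n - \<nu>) \<le> cB \<Longrightarrow> \<nu> \<le> n \<Longrightarrow> n = a+b-1 \<Longrightarrow> 0<b \<Longrightarrow> cQ \<le> cB - d"
  by linarith

lemma Q_le:
  fixes a b d :: nat and D :: "nat set"
  assumes ex: "\<exists>i \<le> a+b-1. i \<notin> D" and b0: "0<b"
  shows "card {q. q \<le> a+b-1 \<and> (\<forall>\<alpha>. \<alpha> \<le> a+b-1 \<and> \<alpha> \<notin> D \<longrightarrow> \<not>(q \<le> \<alpha> \<and> \<alpha> \<le> q + d) \<and> q + d < \<alpha> + a)} \<le> card {i. i \<le> a+b-1 \<and> i \<in> D} - d"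
    (is "card ?Q \<le> card ?B - d")
proof -
  define n where "n = a+b-1"
  define A where "A = {i. i \<le> n \<and> i \<notin> D}"
  have finA: "finite A" unfolding A_def by (rule finite_subset[of _ "{..n}"]) auto
  have finB: "finite ?B" by (rule finite_subset[of _ "{..a+b-1}"]) auto
  have Ane: "A \<noteq> {}" using ex unfolding A_def n_def by blast
  define \<nu> where "\<nu> = Max A"
  define \<mu> where "\<mu> = Min A"
  have \<nu>A: "\<nu> \<in> A" unfolding \<nu>_def using finA Ane by simp
  have \<mu>A: "\<mu> \<in> A" unfolding \<mu>_def using finA Ane by simp
  have \<nu>max: "\<And>x. x \<in> A \<Longrightarrow> x \<le> \<nu>" unfolding \<nu>_def using finA by simp
  have \<mu>min: "\<And>x. x \<in> A \<Longrightarrow> \<mu> \<le> x" unfolding \<mu>_def using finA by simp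
  have Qprop: "\<And>q \<alpha>. q \<in> ?Q \<Longrightarrow> \<alpha> \<in> A \<Longrightarrow> \<not>(q \<le> \<alpha> \<and> \<alpha> \<le> q + d) \<and> q + d < \<alpha> + a"
    unfolding A_def n_def by blast
  have QB: "?Q \<subseteq> ?B"
  proof
    fix q assume q: "q \<in> ?Q"
    have "q \<notin> A"
    proof
      assume "q \<in> A"
      from Qprop[OF q this] show False by auto
    qed
    then show "q \<in> ?B" using q unfolding A_def n_def by auto
  qed
  have finQ: "finite ?Q" using finB QB finite_subset by blast
  show ?thesis
  proof (cases "\<exists>q\<in>?Q. q < \<nu>")
    case True
    define Q1 where "Q1 = {q\<in>?Q. q < \<nu>}"
    have finQ1: "finite Q1" unfolding Q1_def using finQ by simp
    have Q1ne: "Q1 \<noteq> {}" unfolding Q1_def using True by blast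
    define q1 where "q1 = Max Q1"
    have q1Q: "q1 \<in> ?Q" "q1 < \<nu>" using Max_in[OF finQ1 Q1ne] unfolding q1_def Q1_def by auto
    have q1max: "\<And>q. q \<in> ?Q \<Longrightarrow> q < \<nu> \<Longrightarrow> q \<le> q1" unfolding q1_def Q1_def using finQ1 by simp
    have \<nu>big: "q1 + d < \<nu>" using Qprop[OF q1Q(1) \<nu>A] q1Q(2) by auto
    define E where "E = {q1<..q1+d}"
    have EB: "E \<subseteq> ?B"
    proof
      fix i assume i: "i \<in> E"
      have "i \<le> n" using i \<nu>big \<nu>A unfolding E_def A_def by auto
      moreover have "i \<notin> A" using Qprop[OF q1Q(1)] i unfolding E_def by auto
      ultimately show "i \<in> ?B" unfolding A_def n_def by auto
    qed
    have EQ: "?Q \<subseteq> ?B - E"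
    proof
      fix q assume q: "q \<in> ?Q"
      have "q \<notin> E"
      proof
        assume "q \<in> E"
        then have "q1 < q" "q < \<nu>" using \<nu>big unfolding E_def by auto
        then show False using q1max[OF q] by auto
      qed
      then show "q \<in> ?B - E" using q QB by auto
    qed
    have "card ?Q \<le> card (?B - E)" using EQ finB by (meson card_mono finite_Diff)
    also have "\<dots> = card ?B - card E" using EB finB by (simp add: card_Diff_subset finite_subset)
    also have "card E = d" unfolding E_def by simp
    finally show ?thesis .
  next
    case False
    have QI: "?Q \<subseteq> {\<nu><..<\<mu>+a-d}"
    proof
      fix q assume q: "q \<in> ?Q"
      have "\<nu> \<le> q" using False q by auto
      moreover have "q \<noteq> \<nu>" using Qprop[OF q \<nu>A] by auto
      moreover have "q + d < \<mu> + a" using Qprop[OF q \<mu>A] by auto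
      ultimately show "q \<in> {\<nu><..<\<mu>+a-d}" by auto
    qed
    have c1: "card ?Q \<le> \<mu>+a-d - Suc \<nu>" using card_mono[OF _ QI] by simp
    have sub: "{..<\<mu>} \<union> {\<nu><..n} \<subseteq> ?B"
    proof
      fix i assume i: "i \<in> {..<\<mu>} \<union> {\<nu><..n}"
      have "\<mu> \<le> n" "\<nu> \<le> n" using \<mu>A \<nu>A unfolding A_def by auto
      then have "i \<le> n" using i by auto
      moreover have "i \<notin> A" using i \<mu>min \<nu>max by force
      ultimately show "i \<in> ?B" unfolding A_def n_def by auto
    qed
    have "\<mu> \<le> \<nu>" using \<mu>min \<nu>A by blast
    then have "card ({..<\<mu>} \<union> {\<nu><..n}) = \<mu> + (n - \<nu>)"
      by (subst card_Un_disjoint) auto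
    then have c2: "\<mu> + (n - \<nu>) \<le> card ?B" using card_mono[OF finB sub] by simp
    have nn: "\<nu> \<le> n" using \<nu>A unfolding A_def by auto
    show ?thesis by (rule arith1[OF c1 c2 nn n_def b0])
  qed
qed

lemma T_win:
  fixes a b t j :: nat
  assumes b0: "0<b" and ba: "b<a" and jn: "j \<le> a+b-1"
  shows "j - t*b \<le> card {x. (\<forall>\<alpha>. j \<le> \<alpha> \<and> \<alpha> \<le> a+b-1 \<longrightarrow> \<not>(\<alpha> \<le> x \<and> x - \<alpha> \<in> Sab a b)) \<and> t*(a+b) \<le> x \<and> x < t*(a+b)+(a+b)}"
    (is "_ \<le> card ?W")
proof -
  have fin: "finite ?W" by (rule finite_subset[of _ "{..<t*(a+b)+(a+b)}"]) auto
  have tab: "t*(a+b) = t*a + t*b" by (simp add: algebra_simps)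
  have "(\<lambda>q. t*(a+b)+q) ` {..<j - t*b} \<subseteq> ?W"
  proof
    fix x assume "x \<in> (\<lambda>q. t*(a+b)+q) ` {..<j - t*b}"
    then obtain q where q: "q < j - t*b" and x: "x = t*(a+b)+q" by auto
    have "\<not>(\<alpha> \<le> x \<and> x - \<alpha> \<in> Sab a b)" if \<alpha>: "j \<le> \<alpha> \<and> \<alpha> \<le> a+b-1" for \<alpha>
    proof
      assume h: "\<alpha> \<le> x \<and> x - \<alpha> \<in> Sab a b"
      then obtain k where k: "k*a \<le> x - \<alpha>" "x - \<alpha> \<le> k*(a+b)" unfolding Sab_def by blast
      have "k*a < t*a" using h k q x \<alpha> tab by linarith
      then have "k < t" by simp
      then have "Suc k * (a+b) \<le> t*(a+b)" by (intro mult_le_mono1) simp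
      then have "k*(a+b) + (a+b) \<le> t*(a+b)" by simp
      then show False using h k q x \<alpha> b0 by linarith
    qed
    then show "x \<in> ?W" using q x jn by auto
  qed
  moreover have "inj_on (\<lambda>q. t*(a+b)+q) {..<j - t*b}" by (auto simp: inj_on_def)
  ultimately have "card ((\<lambda>q. t*(a+b)+q) ` {..<j - t*b}) \<le> card ?W" using fin card_mono by blast
  then show ?thesis by (simp add: card_image)
qed

definition Tset :: "nat \<Rightarrow> nat \<Rightarrow> nat \<Rightarrow> nat set" where
  "Tset a b j = {x. \<forall>\<alpha>. j \<le> \<alpha> \<and> \<alpha> \<le> a+b-1 \<longrightarrow> \<not>(\<alpha> \<le> x \<and> x - \<alpha> \<in> Sab a b)}"

lemma split_card:
  fixes X :: "nat set"
  shows "card {x\<in>X. x < c + w} = card {x\<in>X. x < c} + card {x\<in>X. c \<le> x \<and> x < c+w}"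
proof -
  have "{x\<in>X. x < c + w} = {x\<in>X. x < c} \<union> {x\<in>X. c \<le> x \<and> x < c+w}" by auto
  moreover have "finite {x\<in>X. x < c}" by (rule finite_subset[of _ "{..<c}"]) auto
  moreover have "finite {x\<in>X. c \<le> x \<and> x < c+w}" by (rule finite_subset[of _ "{..<c+w}"]) auto
  ultimately show ?thesis by (simp add: card_Un_disjoint disjoint_iff)
qed

lemma sum_le:
  fixes a b K :: nat and D :: "nat set"
  assumes b0: "0<b" and ba: "b<a"
  and down: "\<And>y \<alpha>. y \<in> D \<Longrightarrow> \<alpha> \<le> y \<Longrightarrow> y - \<alpha> \<in> Sab a b \<Longrightarrow> \<alpha> \<in> D"
  and ex: "\<exists>i \<le> a+b-1. i \<notin> D"
  and jdef: "j = card {i. i \<le> a+b-1 \<and> i \<in> D}"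
  shows "card {x\<in>D. x < K*(a+b)} \<le> card {x\<in>Tset a b j. x < K*(a+b)}"
proof (induction K)
  case 0 then show ?case by simp
next
  case (Suc K)
  have jn: "j \<le> a+b-1"
  proof -
    obtain i where i: "i \<le> a+b-1" "i \<notin> D" using ex by blast
    have "{i. i \<le> a+b-1 \<and> i \<in> D} \<subseteq> {..a+b-1} - {i}" using i by auto
    then have "j \<le> card ({..a+b-1} - {i})" unfolding jdef by (intro card_mono) auto
    then show ?thesis using i by simp
  qed
  have w1: "card {x\<in>D. K*(a+b) \<le> x \<and> x < K*(a+b) + (a+b)} \<le> j - K*b"
    using le_trans[OF win_le_Q[where t=K, OF down] Q_le[OF ex b0, of "K*b"]] jdef by simp
  have w2: "j - K*b \<le> card {x\<in>Tset a b j. K*(a+b) \<le> x \<and> x < K*(a+b) + (a+b)}"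
    using T_win[OF b0 ba jn, of K] unfolding Tset_def by simp
  have e: "Suc K * (a+b) = K*(a+b) + (a+b)" by simp
  show ?case unfolding e split_card using Suc.IH w1 w2 by linarith
qed

lemma ivt:
  fixes f :: "nat \<Rightarrow> nat"
  assumes f0: "f 0 = 0" and fs: "\<And>L. f (Suc L) \<le> Suc (f L)"
  shows "r \<le> f K \<Longrightarrow> \<exists>L. f L = r"
proof (induction K)
  case 0 then show ?case using f0 by (intro exI[of _ 0]) simp
next
  case (Suc K)
  show ?case
  proof (cases "r \<le> f K")
    case True then show ?thesis using Suc.IH by blast
  next
    case False
    then have "f (Suc K) = r" using Suc.prems fs[of K] by linarith
    then show ?thesis by blast
  qed
qed

lemma Tset_down:
  assumes "x \<in> Tset a b j" "\<alpha> \<le> x" "x - \<alpha> \<in> Sab a b"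
  shows "\<alpha> \<in> Tset a b j"
  unfolding Tset_def
proof (intro CollectI allI impI notI)
  fix \<alpha>' assume h1: "j \<le> \<alpha>' \<and> \<alpha>' \<le> a+b-1" and h2: "\<alpha>' \<le> \<alpha> \<and> \<alpha> - \<alpha>' \<in> Sab a b"
  have "(x - \<alpha>) + (\<alpha> - \<alpha>') \<in> Sab a b" using Sab_add assms(3) h2 by blast
  moreover have "(x - \<alpha>) + (\<alpha> - \<alpha>') = x - \<alpha>'" using h2 assms(2) by simp
  ultimately have "\<alpha>' \<le> x \<and> x - \<alpha>' \<in> Sab a b" using h2 assms(2) by simp
  then show False using assms(1) h1 unfolding Tset_def by blast
qed

theorem proposition4p24:
  fixes a b m r :: nat and M :: "nat set"
  assumes "0 < b" and "b < a"
    and "2 * conductor (interval_semigroup a b) \<le> m + 1"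
    and "amenable (interval_semigroup a b) m r M"
    and "shadow m a b M \<noteq> ground m a b"
  shows "\<exists>N. amenable (interval_semigroup a b) m r N
           \<and> m + a + b - 1 \<notin> shadow m a b N
           \<and> card (shadow m a b N) \<le> card (shadow m a b M)"
proof -
  note b0 = assms(1) and ba = assms(2)
  define S where "S = interval_semigroup a b"
  have SS: "S = Sab a b" unfolding S_def by (rule S_eq)
  have am: "finite M" "card M = r" "M \<subseteq> S" "m \<in> M" "\<And>x. x\<in>M \<Longrightarrow> m \<le> x"
     "\<And>x. x\<in>M \<Longrightarrow> Dset S x \<inter> {m..} \<subseteq> M"
    using assms(4) unfolding amenable_def S_def by auto
  define c where "c = conductor S"
  have cex: "\<forall>n\<ge>a*a. n \<in> S" using Sab_big[OF b0] SS by blast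
  have call: "\<forall>n\<ge>c. n \<in> S" unfolding c_def conductor_def by (rule LeastI_ex) (use cex in blast)
  have cm: "c \<le> m" using assms(3) unfolding c_def S_def by linarith
  have bigS: "\<And>x. m \<le> x \<Longrightarrow> x \<in> S" using call cm by auto
  define n where "n = a+b-1"
  have mn: "m + a + b - 1 = m + n" unfolding n_def using b0 by simp
  define D where "D = {y. m + y \<in> M}"
  have MD: "M = (\<lambda>y. m+y) ` D"
  proof
    show "M \<subseteq> (\<lambda>y. m+y) ` D"
    proof
      fix x assume x: "x \<in> M"
      then have "x = m + (x - m)" "x - m \<in> D" using am(5)[OF x] unfolding D_def by auto
      then show "x \<in> (\<lambda>y. m+y) ` D" by blast
    qed
    show "(\<lambda>y. m+y) ` D \<subseteq> M" unfolding D_def by auto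
  qed
  have finD: "finite D" using am(1) MD by (simp add: finite_image_iff inj_on_def)
  have cardD: "card D = r" using am(2) MD by (simp add: card_image inj_on_def)
  have down: "\<And>y \<alpha>. y \<in> D \<Longrightarrow> \<alpha> \<le> y \<Longrightarrow> y - \<alpha> \<in> Sab a b \<Longrightarrow> \<alpha> \<in> D"
  proof -
    fix y \<alpha> assume y: "y \<in> D" and le: "\<alpha> \<le> y" and s: "y - \<alpha> \<in> Sab a b"
    have "m + \<alpha> \<in> Dset S (m+y) \<inter> {m..}" unfolding Dset_def using bigS[of "m+\<alpha>"] le s SS by auto
    then show "\<alpha> \<in> D" using am(6)[of "m+y"] y unfolding D_def by auto
  qed
  have shM: "shadow m a b M = (\<lambda>i. m+i) ` {i. i \<le> n \<and> i \<in> D}"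
  proof -
    have "shadow m a b M = M \<inter> {m..m+n}" unfolding shadow_def ground_def using mn by simp
    also have "\<dots> = (\<lambda>i. m+i) ` {i. i \<le> n \<and> i \<in> D}" unfolding MD by auto
    finally show ?thesis .
  qed
  have ex: "\<exists>i \<le> a+b-1. i \<notin> D"
  proof (rule ccontr)
    assume "\<not> ?thesis"
    then have all: "\<And>i. i \<le> n \<Longrightarrow> i \<in> D" unfolding n_def by auto
    have "ground m a b \<subseteq> shadow m a b M"
    proof
      fix x assume "x \<in> ground m a b"
      then have x: "m \<le> x" "x \<le> m + n" unfolding ground_def mn by auto
      then have "x - m \<in> {i. i \<le> n \<and> i \<in> D}" using all by auto
      moreover have "x = m + (x - m)" using x by simp
      ultimately show "x \<in> shadow m a b M" unfolding shM by blast
    qed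
    then have "shadow m a b M = ground m a b" unfolding shadow_def by blast
    then show False using assms(5) by blast
  qed
  define j where "j = card {i. i \<le> a+b-1 \<and> i \<in> D}"
  have cardshM: "card (shadow m a b M) = j" unfolding shM j_def n_def by (simp add: card_image inj_on_def)
  have jn: "j \<le> n"
  proof -
    obtain i where i: "i \<le> a+b-1" "i \<notin> D" using ex by blast
    have "{i. i \<le> a+b-1 \<and> i \<in> D} \<subseteq> {..a+b-1} - {i}" using i by auto
    then have "j \<le> card ({..a+b-1} - {i})" unfolding j_def by (intro card_mono) auto
    then show ?thesis using i unfolding n_def by simp
  qed
  have j1: "1 \<le> j"
  proof -
    have "0 \<in> {i. i \<le> a+b-1 \<and> i \<in> D}" using am(4) unfolding D_def by simp
    moreover have "finite {i. i \<le> a+b-1 \<and> i \<in> D}" by (rule finite_subset[of _ "{..a+b-1}"]) auto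
    ultimately have "0 < card {i. i \<le> a+b-1 \<and> i \<in> D}" by (auto simp: card_gt_0_iff)
    then show ?thesis unfolding j_def by simp
  qed
  obtain K0 where K0: "\<forall>x\<in>D. x < K0" using finite_nat_set_iff_bounded[THEN iffD1, OF finD] by blast
  have "K0 \<le> K0*(a+b)" using b0 by simp
  then have "{x\<in>D. x < K0*(a+b)} = D" using K0 by (auto intro: less_le_trans)
  then have rle: "r \<le> card {x\<in>Tset a b j. x < K0*(a+b)}"
    using sum_le[where K=K0, OF b0 ba down ex j_def] cardD by simp
  have fs: "card {x\<in>Tset a b j. x < Suc L} \<le> Suc (card {x\<in>Tset a b j. x < L})" for L
  proof -
    have "{x\<in>Tset a b j. x < Suc L} \<subseteq> insert L {x\<in>Tset a b j. x < L}" by auto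
    moreover have "finite (insert L {x\<in>Tset a b j. x < L})" by (rule finite_subset[of _ "{..L}"]) auto
    ultimately have "card {x\<in>Tset a b j. x < Suc L} \<le> card (insert L {x\<in>Tset a b j. x < L})" by (rule card_mono[rotated])
    also have "\<dots> \<le> Suc (card {x\<in>Tset a b j. x < L})" by (rule card_insert_le_m1) simp_all
    finally show ?thesis .
  qed
  have "\<exists>L. card {x\<in>Tset a b j. x < L} = r"
    by (rule ivt[where f="\<lambda>L. card {x\<in>Tset a b j. x < L}", OF _ fs rle]) simp
  then obtain L where L: "card {x\<in>Tset a b j. x < L} = r" by blast
  define T where "T = {x\<in>Tset a b j. x < L}"
  define N where "N = (\<lambda>x. m+x) ` T"
  have finT: "finite T" unfolding T_def by (rule finite_subset[of _ "{..<L}"]) auto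
  have cardN: "card N = r" unfolding N_def using L unfolding T_def by (simp add: card_image inj_on_def)
  have "0 < card M" using am(1,4) by (auto simp: card_gt_0_iff)
  then have r1: "1 \<le> r" using am(2) by simp
  have L0: "0 < L" using L r1 by (cases L) auto
  have T0: "0 \<in> Tset a b j" unfolding Tset_def using j1 by auto
  have mN: "m \<in> N" unfolding N_def T_def using T0 L0 by force
  have NS: "N \<subseteq> S" unfolding N_def using bigS by auto
  have closed: "\<forall>x\<in>N. Dset S x \<inter> {m..} \<subseteq> N"
  proof (intro ballI subsetI)
    fix x \<beta> assume x: "x \<in> N" and \<beta>: "\<beta> \<in> Dset S x \<inter> {m..}"
    obtain y where y: "y \<in> Tset a b j" "y < L" "x = m + y" using x unfolding N_def T_def by auto
    have b1: "\<beta> \<le> x" "x - \<beta> \<in> Sab a b" "m \<le> \<beta>" using \<beta> SS unfolding Dset_def by auto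
    have "\<beta> - m \<le> y" "y - (\<beta> - m) = x - \<beta>" using b1 y by auto
    then have "\<beta> - m \<in> Tset a b j" using Tset_down[OF y(1)] b1 by simp
    moreover have "\<beta> - m < L" using \<open>\<beta> - m \<le> y\<close> y by simp
    moreover have "\<beta> = m + (\<beta> - m)" using b1 by simp
    ultimately show "\<beta> \<in> N" unfolding N_def T_def by blast
  qed
  have amN: "amenable (interval_semigroup a b) m r N"
    unfolding amenable_def S_def[symmetric]
    using finT cardN NS mN closed assms(3) S_def by (auto simp: N_def)
  have notop: "m + a + b - 1 \<notin> shadow m a b N"
  proof
    assume "m + a + b - 1 \<in> shadow m a b N"
    then have "n \<in> Tset a b j" unfolding shadow_def mn N_def T_def by auto
    then show False using jn unfolding Tset_def n_def using Sab_0 by auto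
  qed
  have "shadow m a b N \<subseteq> (\<lambda>i. m+i) ` {..<j}"
  proof
    fix x assume "x \<in> shadow m a b N"
    then obtain y where y: "y \<in> Tset a b j" "x = m+y" "y \<le> n" unfolding shadow_def ground_def mn N_def T_def by auto
    have "y < j"
    proof (rule ccontr)
      assume ny: "\<not> y < j"
      have "\<forall>\<alpha>. j \<le> \<alpha> \<and> \<alpha> \<le> a+b-1 \<longrightarrow> \<not>(\<alpha> \<le> y \<and> y - \<alpha> \<in> Sab a b)" using y(1) unfolding Tset_def by simp
      from this[rule_format, of y] ny y(3) Sab_0 show False unfolding n_def by simp
    qed
    then show "x \<in> (\<lambda>i. m+i) ` {..<j}" using y by blast
  qed
  then have "card (shadow m a b N) \<le> card ((\<lambda>i. m+i) ` {..<j})" by (intro card_mono) auto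
  also have "\<dots> = j" by (simp add: card_image inj_on_def)
  finally have "card (shadow m a b N) \<le> card (shadow m a b M)" using cardshM by simp
  then show ?thesis using amN notop by blast
qed

end
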